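(* Let $(W,S)$ be a finitely generated Coxeter system and $u,v\in W$. (1) If $u\le v$, then $C(v)\subseteq C(u)$ (equivalently $S(u)\subseteq S(v)$). (2) If $u\le v$, then $[u,v]=\{v_I: S(u)\subseteq I\subseteq S(v)\}$. (3) If $u\le v$, then $u\le_{\mathcal L} v$. (4) If $W_{S(u)}$ has finite index $k$ in $W$, then $|\{w\in W: w\ge u\}|=k$.
   Context: $(W,S)$ is a finitely generated Coxeter system with length function $\ell$. For $w\in W$, $S(w)\subseteq S$ is the set of simple reflections appearing in a (any) reduced expression of $w$, and $C(w)=S\setminus S(w)$. For $I\subseteq S$, $W_I$ is the parabolic subgroup generated by $I$, $X_I=\{u\in W:\ell(us)>\ell(u)\ \forall s\in I\}$, and every $w\in W$ factors uniquely as $w=w^Iw_I$ with $w^I\in X_I$, $w_I\in W_I$ (parabolic components along $I$), with $\ell(w)=\ell(w^I)+\ell(w_I)$. The partial order on $W$: $u\le v$ if and only if $v_{S(u)}=u$. The left weak order: $u\le_{\mathcal L}v$ iff there is $v'\in W$ with $v=v'u$ and $\ell(v)=\ell(v')+\ell(u)$. *)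

theory Defs
  imports "HOL-Algebra.Multiplicative_Group"
begin

(* Coxeter systems, rendered in HOL-Algebra: W = carrier G, S \<subseteq> carrier G. *)

definition wprod :: "('a, 'b) monoid_scheme \<Rightarrow> 'a list \<Rightarrow> 'a" where
  "wprod G ws = foldr (\<lambda>x y. x \<otimes>\<^bsub>G\<^esub> y) ws \<one>\<^bsub>G\<^esub>"

(* The congruence on words generated by the Coxeter relations
   s s = 1 and (s t)^{m(s,t)} = 1 (when m(s,t) = order of st is finite). *)
inductive cox_rel :: "('a, 'b) monoid_scheme \<Rightarrow> 'a set \<Rightarrow> 'a list \<Rightarrow> 'a list \<Rightarrow> bool"
  for G S where
  refl: "cox_rel G S w w"
| sym: "cox_rel G S w w' \<Longrightarrow> cox_rel G S w' w"
| trans: "cox_rel G S w w' \<Longrightarrow> cox_rel G S w' w'' \<Longrightarrow> cox_rel G S w w''"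
| ctxt: "cox_rel G S w w' \<Longrightarrow> cox_rel G S (a @ w @ b) (a @ w' @ b)"
| sq: "s \<in> S \<Longrightarrow> cox_rel G S [s, s] []"
| braid: "s \<in> S \<Longrightarrow> t \<in> S \<Longrightarrow> group.ord G (s \<otimes>\<^bsub>G\<^esub> t) \<noteq> 0 \<Longrightarrow>
           cox_rel G S (concat (replicate (group.ord G (s \<otimes>\<^bsub>G\<^esub> t)) [s, t])) []"

definition coxeter_system :: "('a, 'b) monoid_scheme \<Rightarrow> 'a set \<Rightarrow> bool" where
  "coxeter_system G S \<longleftrightarrow> group G \<and> S \<subseteq> carrier G \<and>
     (\<forall>s\<in>S. s \<noteq> \<one>\<^bsub>G\<^esub> \<and> s \<otimes>\<^bsub>G\<^esub> s = \<one>\<^bsub>G\<^esub>) \<and>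
     generate G S = carrier G \<and>
     (\<forall>w1\<in>lists S. \<forall>w2\<in>lists S. wprod G w1 = wprod G w2 \<longrightarrow> cox_rel G S w1 w2)"

definition cox_len :: "('a, 'b) monoid_scheme \<Rightarrow> 'a set \<Rightarrow> 'a \<Rightarrow> nat" where
  "cox_len G S w = (LEAST n. \<exists>ws\<in>lists S. length ws = n \<and> wprod G ws = w)"

definition reduced_word :: "('a, 'b) monoid_scheme \<Rightarrow> 'a set \<Rightarrow> 'a list \<Rightarrow> 'a \<Rightarrow> bool" where
  "reduced_word G S ws w \<longleftrightarrow> ws \<in> lists S \<and> wprod G ws = w \<and> length ws = cox_len G S w"

definition supp :: "('a, 'b) monoid_scheme \<Rightarrow> 'a set \<Rightarrow> 'a \<Rightarrow> 'a set" where
  "supp G S w = {s. \<exists>ws. reduced_word G S ws w \<and> s \<in> set ws}"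

definition cosupp :: "('a, 'b) monoid_scheme \<Rightarrow> 'a set \<Rightarrow> 'a \<Rightarrow> 'a set" where
  "cosupp G S w = S - supp G S w"

definition parabolic :: "('a, 'b) monoid_scheme \<Rightarrow> 'a set \<Rightarrow> 'a set" where
  "parabolic G I = generate G I"

definition min_reps :: "('a, 'b) monoid_scheme \<Rightarrow> 'a set \<Rightarrow> 'a set \<Rightarrow> 'a set" where
  "min_reps G S I = {u \<in> carrier G. \<forall>s\<in>I. cox_len G S u < cox_len G S (u \<otimes>\<^bsub>G\<^esub> s)}"

definition par_comp :: "('a, 'b) monoid_scheme \<Rightarrow> 'a set \<Rightarrow> 'a set \<Rightarrow> 'a \<Rightarrow> 'a" where
  "par_comp G S I w = (THE y. y \<in> parabolic G I \<and> w \<otimes>\<^bsub>G\<^esub> inv\<^bsub>G\<^esub> y \<in> min_reps G S I)"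

definition cox_le :: "('a, 'b) monoid_scheme \<Rightarrow> 'a set \<Rightarrow> 'a \<Rightarrow> 'a \<Rightarrow> bool" where
  "cox_le G S u v \<longleftrightarrow> u \<in> carrier G \<and> v \<in> carrier G \<and> par_comp G S (supp G S u) v = u"

definition cox_interval :: "('a, 'b) monoid_scheme \<Rightarrow> 'a set \<Rightarrow> 'a \<Rightarrow> 'a \<Rightarrow> 'a set" where
  "cox_interval G S u v = {w \<in> carrier G. cox_le G S u w \<and> cox_le G S w v}"

definition left_weak_le :: "('a, 'b) monoid_scheme \<Rightarrow> 'a set \<Rightarrow> 'a \<Rightarrow> 'a \<Rightarrow> bool" where
  "left_weak_le G S u v \<longleftrightarrow>
     (\<exists>v'\<in>carrier G. v = v' \<otimes>\<^bsub>G\<^esub> u \<and> cox_len G S v = cox_len G S v' + cox_len G S u)"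

end

theory Submission
  imports Defs
begin


fun par :: "('a, 'b) monoid_scheme \<Rightarrow> 'a list \<Rightarrow> 'a \<Rightarrow> bool" where
  "par G [] r = False"
| "par G (x # a) r = ((x = r) \<noteq> par G a (inv\<^bsub>G\<^esub> x \<otimes>\<^bsub>G\<^esub> r \<otimes>\<^bsub>G\<^esub> x))"

fun refls :: "('a, 'b) monoid_scheme \<Rightarrow> 'a list \<Rightarrow> 'a list" where
  "refls G [] = []"
| "refls G (x # a) = x # map (\<lambda>q. x \<otimes>\<^bsub>G\<^esub> q \<otimes>\<^bsub>G\<^esub> inv\<^bsub>G\<^esub> x) (refls G a)"

lemma wprod_Nil [simp]: "wprod G [] = \<one>\<^bsub>G\<^esub>"
  by (simp add: wprod_def)

lemma wprod_Cons [simp]: "wprod G (x # xs) = x \<otimes>\<^bsub>G\<^esub> wprod G xs"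
  by (simp add: wprod_def)

locale coxs = group G for G :: "('a, 'b) monoid_scheme" (structure) +
  fixes S :: "'a set"
  assumes cs: "coxeter_system G S"
begin

lemma S_carr: "S \<subseteq> carrier G"
  using cs by (simp add: coxeter_system_def)

lemma S_sq: "s \<in> S \<Longrightarrow> s \<otimes> s = \<one>"
  using cs by (simp add: coxeter_system_def)

lemma S_ne1: "s \<in> S \<Longrightarrow> s \<noteq> \<one>"
  using cs by (simp add: coxeter_system_def)

lemma S_inv: "s \<in> S \<Longrightarrow> inv s = s"
  using S_sq S_carr by (meson inv_equality subsetD)

lemma S_carr': "s \<in> S \<Longrightarrow> s \<in> carrier G"
  using S_carr by blast

lemma pres: "w1 \<in> lists S \<Longrightarrow> w2 \<in> lists S \<Longrightarrow> wprod G w1 = wprod G w2 \<Longrightarrow> cox_rel G S w1 w2"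
  using cs by (simp add: coxeter_system_def)

lemma wprod_closed: "set xs \<subseteq> carrier G \<Longrightarrow> wprod G xs \<in> carrier G"
  by (induct xs) auto

lemma wprod_append: "set xs \<subseteq> carrier G \<Longrightarrow> set ys \<subseteq> carrier G \<Longrightarrow>
   wprod G (xs @ ys) = wprod G xs \<otimes> wprod G ys"
  by (induct xs) (auto simp: wprod_closed m_assoc)

lemma lists_carr: "xs \<in> lists S \<Longrightarrow> set xs \<subseteq> carrier G"
  using S_carr by auto

lemma wprod_closedS: "xs \<in> lists S \<Longrightarrow> wprod G xs \<in> carrier G"
  using wprod_closed lists_carr by blast

lemma wprod_appendS: "xs \<in> lists S \<Longrightarrow> ys \<in> lists S \<Longrightarrow>
   wprod G (xs @ ys) = wprod G xs \<otimes> wprod G ys"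
  using wprod_append lists_carr by blast

lemma wprod_rev: "xs \<in> lists S \<Longrightarrow> wprod G (rev xs) = inv (wprod G xs)"
proof (induct xs)
  case Nil then show ?case by simp
next
  case (Cons x xs)
  have "wprod G (rev (x # xs)) = wprod G (rev xs) \<otimes> wprod G [x]"
    using Cons wprod_appendS[of "rev xs" "[x]"] by (simp add: in_lists_conv_set)
  also have "\<dots> = inv (wprod G xs) \<otimes> x" using Cons S_carr' by simp
  also have "\<dots> = inv (x \<otimes> wprod G xs)" using Cons S_inv S_carr' wprod_closedS
    by (simp add: inv_mult_group)
  finally show ?case by simp
qed

end


lemma count_double:
  assumes "\<And>i. P (i + m) = P i"
  shows "length (filter P [0..<2*m]) = 2 * length (filter P [0..<m])"
proof -
  have 1: "[0..<2*m] = [0..<m] @ [m..<m+m]"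
    using upt_add_eq_append[of 0 m m] by (simp only: mult_2 add_0)
  have 2: "[m..<m+m] = map (\<lambda>i. i + m) [0..<m]"
    using map_add_upt[of m m] by simp
  have 3: "filter P (map (\<lambda>i. i + m) [0..<m]) = map (\<lambda>i. i + m) (filter P [0..<m])"
    using assms by (simp add: filter_map comp_def)
  show ?thesis unfolding 1 2 filter_append 3 length_append length_map by simp
qed

lemma odd_filter_app2: "odd (length (filter P (xs @ [a, b]))) = (odd (length (filter P xs)) \<noteq> (P a \<noteq> P b))"
  by auto

lemma concat_rep_Suc: "concat (replicate (Suc n) l) = concat (replicate n l) @ l"
  by (induct n) auto

context coxs
begin

lemma conj_iff: "a \<in> carrier G \<Longrightarrow> q \<in> carrier G \<Longrightarrow> r \<in> carrier G \<Longrightarrow>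
   (q = inv a \<otimes> r \<otimes> a) = (r = a \<otimes> q \<otimes> inv a)"
  by (auto simp: m_assoc[symmetric]) (simp_all add: m_assoc)

lemma conj_iff2: "a \<in> carrier G \<Longrightarrow> q \<in> carrier G \<Longrightarrow> r \<in> carrier G \<Longrightarrow>
   (inv a \<otimes> r \<otimes> a = q) = (r = a \<otimes> q \<otimes> inv a)"
  using conj_iff[of a q r] by (simp only: eq_commute[of "inv a \<otimes> r \<otimes> a" q])

lemma par_append: "set a \<subseteq> carrier G \<Longrightarrow> r \<in> carrier G \<Longrightarrow>
  par G (a @ b) r = (par G a r \<noteq> par G b (inv (wprod G a) \<otimes> r \<otimes> wprod G a))"
proof (induct a arbitrary: r)
  case Nil then show ?case by simp
next
  case (Cons x a)
  have x: "x \<in> carrier G" and a: "set a \<subseteq> carrier G" using Cons by auto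
  have A: "wprod G a \<in> carrier G" using a wprod_closed by blast
  have "inv (wprod G a) \<otimes> (inv x \<otimes> r \<otimes> x) \<otimes> wprod G a
        = inv (x \<otimes> wprod G a) \<otimes> r \<otimes> (x \<otimes> wprod G a)"
    using x A Cons by (simp add: inv_mult_group m_assoc)
  then show ?case using Cons x a by auto
qed

lemma braid_facts:
  assumes s: "s \<in> S" and t: "t \<in> S"
  shows "wprod G (concat (replicate n [s, t])) = (s \<otimes> t) [^] n"
    and "s \<otimes> inv ((s \<otimes> t) [^] n) = (s \<otimes> t) [^] n \<otimes> s"
proof -
  have sc: "s \<in> carrier G" and tc: "t \<in> carrier G" using s t S_carr' by auto
  let ?x = "s \<otimes> t"
  have xc: "?x \<in> carrier G" using sc tc by simp
  show "wprod G (concat (replicate n [s, t])) = ?x [^] n"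
  proof (induct n)
    case 0 then show ?case by simp
  next
    case (Suc n)
    have l: "set (concat (replicate n [s, t])) \<subseteq> carrier G" using sc tc by auto
    show ?case unfolding concat_rep_Suc using Suc l sc tc
      by (simp add: wprod_append)
  qed
  show "s \<otimes> inv (?x [^] n) = ?x [^] n \<otimes> s"
  proof (induct n)
    case 0 then show ?case using sc by simp
  next
    case (Suc n)
    have "s \<otimes> inv (?x [^] Suc n) = (s \<otimes> inv ?x) \<otimes> inv (?x [^] n)"
      using xc sc by (simp add: inv_mult_group m_assoc)
    also have "s \<otimes> inv ?x = ?x \<otimes> s"
      using sc tc s t S_inv by (simp add: inv_mult_group m_assoc)
    also have "?x \<otimes> s \<otimes> inv (?x [^] n) = ?x \<otimes> (?x [^] n \<otimes> s)"
      using Suc xc sc by (simp add: m_assoc)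
    also have "\<dots> = ?x [^] Suc n \<otimes> s"
      using xc sc by (simp add: m_assoc[symmetric] nat_pow_Suc2[symmetric])
    finally show ?case .
  qed
qed

lemma par_braid:
  assumes s: "s \<in> S" and t: "t \<in> S" and r: "r \<in> carrier G"
  shows "par G (concat (replicate n [s, t])) r =
         odd (length (filter (\<lambda>i. r = (s \<otimes> t) [^] i \<otimes> s) [0..<2*n]))"
proof (induct n)
  case 0 then show ?case by simp
next
  case (Suc n)
  have sc: "s \<in> carrier G" and tc: "t \<in> carrier G" using s t S_carr' by auto
  let ?x = "s \<otimes> t"
  let ?y = "?x [^] n"
  have xc: "?x \<in> carrier G" using sc tc by simp
  have yc: "?y \<in> carrier G" using xc by simp
  have l: "set (concat (replicate n [s, t])) \<subseteq> carrier G" using sc tc by auto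
  let ?q = "inv ?y \<otimes> r \<otimes> ?y"
  have qc: "?q \<in> carrier G" using yc r by simp
  have e1: "(s = ?q) = (r = ?x [^] (2*n) \<otimes> s)"
  proof -
    have "(s = ?q) = (r = ?y \<otimes> s \<otimes> inv ?y)" using conj_iff[OF yc sc r] by simp
    also have "?y \<otimes> s \<otimes> inv ?y = ?y \<otimes> ?y \<otimes> s"
      using braid_facts(2)[OF s t, of n] yc sc by (simp add: m_assoc)
    also have "?y \<otimes> ?y = ?x [^] (2*n)" using xc by (simp add: nat_pow_mult mult_2)
    finally show ?thesis .
  qed
  have e2: "(t = inv s \<otimes> ?q \<otimes> s) = (r = ?x [^] (2*n+1) \<otimes> s)"
  proof -
    have "(t = inv s \<otimes> ?q \<otimes> s) = (?q = s \<otimes> t \<otimes> inv s)" using conj_iff[OF sc tc qc] by simp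
    also have "s \<otimes> t \<otimes> inv s = ?x \<otimes> s" using S_inv s by simp
    also have "(?q = ?x \<otimes> s) = (r = ?y \<otimes> (?x \<otimes> s) \<otimes> inv ?y)"
      using conj_iff2[OF yc _ r, of "?x \<otimes> s"] xc sc by simp
    also have "?y \<otimes> (?x \<otimes> s) \<otimes> inv ?y = ?y \<otimes> ?x \<otimes> ?y \<otimes> s"
      using braid_facts(2)[OF s t, of n] yc sc xc by (simp add: m_assoc)
    also have "?y \<otimes> ?x \<otimes> ?y = ?x [^] (2*n+1)"
    proof -
      have "?y \<otimes> ?x = ?x [^] Suc n" by simp
      then have "?y \<otimes> ?x \<otimes> ?y = ?x [^] Suc n \<otimes> ?y" by simp
      also have "\<dots> = ?x [^] (Suc n + n)" using xc by (simp only: nat_pow_mult)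
      finally show ?thesis by (simp add: mult_2)
    qed
    finally show ?thesis .
  qed
  have "par G (concat (replicate (Suc n) [s, t])) r =
        (par G (concat (replicate n [s, t])) r \<noteq> par G [s, t] ?q)"
    unfolding concat_rep_Suc using par_append[OF l r] braid_facts(1)[OF s t] by simp
  also have "par G [s, t] ?q = ((s = ?q) \<noteq> (t = inv s \<otimes> ?q \<otimes> s))" by simp
  also have "\<dots> = ((r = ?x [^] (2*n) \<otimes> s) \<noteq> (r = ?x [^] (2*n+1) \<otimes> s))"
    by (simp only: e1 e2)
  finally have *: "par G (concat (replicate (Suc n) [s, t])) r =
     (par G (concat (replicate n [s, t])) r \<noteq>
       ((r = ?x [^] (2*n) \<otimes> s) \<noteq> (r = ?x [^] (2*n+1) \<otimes> s)))" .
  have u: "[0..<2*Suc n] = [0..<2*n] @ [2*n, 2*n+1]" by simp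
  show ?case unfolding * Suc u odd_filter_app2 ..
qed

end


context coxs
begin

lemma braid_case:
  assumes s: "s \<in> S" and t: "t \<in> S" and m: "ord (s \<otimes> t) \<noteq> 0"
  shows "wprod G (concat (replicate (ord (s \<otimes> t)) [s, t])) = \<one>"
    and "r \<in> carrier G \<Longrightarrow> \<not> par G (concat (replicate (ord (s \<otimes> t)) [s, t])) r"
proof -
  have sc: "s \<in> carrier G" and tc: "t \<in> carrier G" using s t S_carr' by auto
  let ?x = "s \<otimes> t"
  have xc: "?x \<in> carrier G" using sc tc by simp
  show "wprod G (concat (replicate (ord ?x) [s, t])) = \<one>"
    using braid_facts(1)[OF s t] xc by simp
  assume r: "r \<in> carrier G"
  have per: "(r = ?x [^] (i + ord ?x) \<otimes> s) = (r = ?x [^] i \<otimes> s)" for i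
  proof -
    have "?x [^] (i + ord ?x) = ?x [^] i" using nat_pow_mult[OF xc, of i "ord ?x"] xc by simp
    then show ?thesis by simp
  qed
  show "\<not> par G (concat (replicate (ord ?x) [s, t])) r"
    unfolding par_braid[OF s t r] count_double[of "\<lambda>i. r = ?x [^] i \<otimes> s", OF per] by simp
qed

lemma rel_inv:
  "cox_rel G S w w' \<Longrightarrow> (set w \<subseteq> carrier G \<longleftrightarrow> set w' \<subseteq> carrier G) \<and>
     (set w \<subseteq> carrier G \<longrightarrow> wprod G w = wprod G w' \<and> (\<forall>r\<in>carrier G. par G w r = par G w' r))"
proof (induct rule: cox_rel.induct)
  case (refl w) then show ?case by simp
next
  case (sym w w') then show ?case by metis
next
  case (trans w w' w'') then show ?case by metis
next
  case (ctxt w w' a b)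
  have sets: "set (a @ w @ b) \<subseteq> carrier G \<longleftrightarrow> set (a @ w' @ b) \<subseteq> carrier G"
    using ctxt by auto
  moreover have "wprod G (a @ w @ b) = wprod G (a @ w' @ b) \<and>
      (\<forall>r\<in>carrier G. par G (a @ w @ b) r = par G (a @ w' @ b) r)"
    if h: "set (a @ w @ b) \<subseteq> carrier G"
  proof -
    have a: "set a \<subseteq> carrier G" and w: "set w \<subseteq> carrier G" and b: "set b \<subseteq> carrier G"
      using h by auto
    have w': "set w' \<subseteq> carrier G" using ctxt w by blast
    have eq: "wprod G w = wprod G w'" and peq: "\<And>r. r \<in> carrier G \<Longrightarrow> par G w r = par G w' r"
      using ctxt w by auto
    have A: "wprod G a \<in> carrier G" using a wprod_closed by blast
    have W: "wprod G w \<in> carrier G" using w wprod_closed by blast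
    have "wprod G (a @ w @ b) = wprod G a \<otimes> (wprod G w \<otimes> wprod G b)"
      using a w b by (simp add: wprod_append)
    moreover have "wprod G (a @ w' @ b) = wprod G a \<otimes> (wprod G w' \<otimes> wprod G b)"
      using a w' b by (simp add: wprod_append)
    moreover have "par G (a @ w @ b) r = par G (a @ w' @ b) r" if r: "r \<in> carrier G" for r
    proof -
      let ?r1 = "inv (wprod G a) \<otimes> r \<otimes> wprod G a"
      have r1: "?r1 \<in> carrier G" using A r by simp
      have "par G (a @ w @ b) r = (par G a r \<noteq> (par G w ?r1 \<noteq>
              par G b (inv (wprod G w) \<otimes> ?r1 \<otimes> wprod G w)))"
        using par_append[OF a r, of "w @ b"] par_append[OF w r1, of b] by simp
      moreover have "par G (a @ w' @ b) r = (par G a r \<noteq> (par G w' ?r1 \<noteq>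
              par G b (inv (wprod G w') \<otimes> ?r1 \<otimes> wprod G w')))"
        using par_append[OF a r, of "w' @ b"] par_append[OF w' r1, of b] by simp
      ultimately show ?thesis using eq peq[OF r1] by simp
    qed
    ultimately show ?thesis using eq by simp
  qed
  ultimately show ?case by blast
next
  case (sq s)
  have sc: "s \<in> carrier G" using sq S_carr' by auto
  have "\<not> par G [s, s] r" if r: "r \<in> carrier G" for r
  proof -
    have "(s = inv s \<otimes> r \<otimes> s) = (r = s)"
      using conj_iff[OF sc sc r] sq S_inv sc S_sq[OF sq] by (auto simp: m_assoc)
    then show ?thesis by auto
  qed
  then show ?case using sq sc S_sq by auto
next
  case (braid s t)
  have sc: "s \<in> carrier G" and tc: "t \<in> carrier G" using braid S_carr' by auto
  show ?case using braid_case[OF braid] sc tc by auto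
qed

lemma par_inv:
  assumes "a \<in> lists S" "b \<in> lists S" "wprod G a = wprod G b" "r \<in> carrier G"
  shows "par G a r = par G b r"
proof -
  have "cox_rel G S a b" using pres assms by blast
  then show ?thesis using rel_inv lists_carr assms by blast
qed

end


lemma refls_length [simp]: "length (refls G a) = length a"
  by (induct a) auto

context coxs
begin

lemma inv_cancel_l: "x \<in> carrier G \<Longrightarrow> q \<in> carrier G \<Longrightarrow> inv x \<otimes> (x \<otimes> q) = q"
  by (simp add: m_assoc[symmetric])

abbreviation len where "len w \<equiv> cox_len G S w"

definition Nset where "Nset a = {r \<in> carrier G. par G a r}"

lemma gen_lists: "I \<subseteq> S \<Longrightarrow> generate G I = wprod G ` lists I"
proof
  assume I: "I \<subseteq> S"
  show "generate G I \<subseteq> wprod G ` lists I"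
  proof
    fix h assume "h \<in> generate G I"
    then show "h \<in> wprod G ` lists I"
    proof (induct rule: generate.induct)
      case one then show ?case by (metis image_eqI lists.Nil wprod_Nil)
    next
      case (incl h)
      then have "wprod G [h] = h" using I S_carr' by auto
      then show ?case using incl by (metis image_eqI lists.Cons lists.Nil)
    next
      case (inv h)
      then have "wprod G [h] = inv h" using I S_carr' S_inv by auto
      then show ?case using inv by (metis image_eqI lists.Cons lists.Nil)
    next
      case (eng h1 h2)
      then obtain a b where "a \<in> lists I" "b \<in> lists I" "h1 = wprod G a" "h2 = wprod G b" by blast
      moreover have "a \<in> lists S" "b \<in> lists S" using calculation I by auto
      ultimately show ?case using wprod_appendS
        by (metis append_in_lists_conv image_eqI)
    qed
  qed
next
  assume I: "I \<subseteq> S"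
  show "wprod G ` lists I \<subseteq> generate G I"
  proof
    fix h assume "h \<in> wprod G ` lists I"
    then obtain a where a: "a \<in> lists I" "h = wprod G a" by blast
    have "wprod G a \<in> generate G I" using a(1)
      by (induct a) (auto intro: generate.intros)
    then show "h \<in> generate G I" using a by simp
  qed
qed

lemma carrier_lists: "carrier G = wprod G ` lists S"
  using cs gen_lists[of S] by (simp add: coxeter_system_def)

lemma len_le: "a \<in> lists S \<Longrightarrow> len (wprod G a) \<le> length a"
  unfolding cox_len_def by (rule Least_le) blast

lemma red_ex: "w \<in> carrier G \<Longrightarrow> \<exists>a\<in>lists S. length a = len w \<and> wprod G a = w"
proof -
  assume "w \<in> carrier G"
  then have "w \<in> wprod G ` lists S" using carrier_lists by simp
  then obtain a where "a \<in> lists S" "wprod G a = w" by auto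
  then have "\<exists>n. \<exists>ws\<in>lists S. length ws = n \<and> wprod G ws = w" by blast
  then show ?thesis unfolding cox_len_def by (rule LeastI_ex)
qed

lemma len_inv_le: "w \<in> carrier G \<Longrightarrow> len (inv w) \<le> len w"
proof -
  assume w: "w \<in> carrier G"
  obtain a where a: "a \<in> lists S" "length a = len w" "wprod G a = w" using red_ex[OF w] by blast
  have "rev a \<in> lists S" using a by (simp add: in_lists_conv_set)
  then have "len (wprod G (rev a)) \<le> length a" using len_le by fastforce
  then show ?thesis using a wprod_rev by simp
qed

lemma len_inv: "w \<in> carrier G \<Longrightarrow> len (inv w) = len w"
  using len_inv_le[of w] len_inv_le[of "inv w"] by simp

lemma len_mult: "a \<in> carrier G \<Longrightarrow> b \<in> carrier G \<Longrightarrow> len (a \<otimes> b) \<le> len a + len b"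
proof -
  assume a: "a \<in> carrier G" and b: "b \<in> carrier G"
  obtain x where x: "x \<in> lists S" "length x = len a" "wprod G x = a" using red_ex[OF a] by blast
  obtain y where y: "y \<in> lists S" "length y = len b" "wprod G y = b" using red_ex[OF b] by blast
  have "len (wprod G (x @ y)) \<le> length (x @ y)" using x y len_le[of "x @ y"] by simp
  then show ?thesis using x y wprod_appendS by simp
qed

lemma len_one: "len \<one> = 0"
  using len_le[of "[]"] by simp

lemma len_zero: "w \<in> carrier G \<Longrightarrow> len w = 0 \<Longrightarrow> w = \<one>"
  using red_ex[of w] by auto

lemma len_S: "s \<in> S \<Longrightarrow> len s = 1"
proof -
  assume s: "s \<in> S"
  have "len (wprod G [s]) \<le> 1" using len_le[of "[s]"] s by simp
  moreover have "len s \<noteq> 0" using len_zero S_ne1 s S_carr' by blast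
  ultimately show ?thesis using s S_carr' by simp
qed

lemma par_refls: "set a \<subseteq> carrier G \<Longrightarrow> r \<in> carrier G \<Longrightarrow> par G a r \<Longrightarrow> r \<in> set (refls G a)"
proof (induct a arbitrary: r)
  case Nil then show ?case by simp
next
  case (Cons x a)
  have x: "x \<in> carrier G" using Cons by simp
  show ?case
  proof (cases "x = r")
    case True then show ?thesis by simp
  next
    case False
    let ?r' = "inv x \<otimes> r \<otimes> x"
    have "par G a ?r'" using Cons False by simp
    then have "?r' \<in> set (refls G a)" using Cons x by simp
    moreover have "r = x \<otimes> ?r' \<otimes> inv x" using conj_iff[OF x _ Cons(3), of ?r'] x Cons by simp
    ultimately show ?thesis by auto
  qed
qed

lemma Nset_finite: "set a \<subseteq> carrier G \<Longrightarrow> finite (Nset a) \<and> card (Nset a) \<le> length a"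
proof -
  assume a: "set a \<subseteq> carrier G"
  have "Nset a \<subseteq> set (refls G a)" using par_refls[OF a] by (auto simp: Nset_def)
  then show ?thesis using card_mono[of "set (refls G a)" "Nset a"] card_length[of "refls G a"]
    by (simp add: finite_subset)
qed

lemma par_split: "set a \<subseteq> carrier G \<Longrightarrow> r \<in> carrier G \<Longrightarrow> par G a r \<Longrightarrow>
   \<exists>xs y zs. a = xs @ y # zs \<and> r = wprod G xs \<otimes> y \<otimes> inv (wprod G xs)"
proof (induct a arbitrary: r)
  case Nil then show ?case by simp
next
  case (Cons x a)
  have x: "x \<in> carrier G" and a: "set a \<subseteq> carrier G" using Cons by auto
  show ?case
  proof (cases "x = r")
    case True
    then have "x # a = [] @ x # a \<and> r = wprod G [] \<otimes> x \<otimes> inv (wprod G [])" using x by simp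
    then show ?thesis by blast
  next
    case False
    let ?r' = "inv x \<otimes> r \<otimes> x"
    have "par G a ?r'" using Cons False by simp
    moreover have r'c: "?r' \<in> carrier G" using x Cons(3) by simp
    ultimately obtain xs y zs where h: "a = xs @ y # zs" "?r' = wprod G xs \<otimes> y \<otimes> inv (wprod G xs)"
      using Cons(1)[OF a r'c] by blast
    have X: "wprod G xs \<in> carrier G" and y: "y \<in> carrier G" using a h wprod_closed by auto
    have "r = x \<otimes> ?r' \<otimes> inv x" using conj_iff[OF x _ Cons(3), of ?r'] x Cons by simp
    also have "\<dots> = (x \<otimes> wprod G xs) \<otimes> y \<otimes> inv (x \<otimes> wprod G xs)"
      using h X x y by (simp add: m_assoc inv_mult_group)
    finally have "x # a = (x # xs) @ y # zs \<and> r = wprod G (x # xs) \<otimes> y \<otimes> inv (wprod G (x # xs))"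
      using h by simp
    then show ?thesis by blast
  qed
qed

lemma del_lemma:
  assumes "xs @ y # zs \<in> lists S"
  shows "(wprod G xs \<otimes> y \<otimes> inv (wprod G xs)) \<otimes> wprod G (xs @ y # zs) = wprod G (xs @ zs)"
proof -
  have xs: "xs \<in> lists S" and y: "y \<in> S" and zs: "zs \<in> lists S" using assms by auto
  have X: "wprod G xs \<in> carrier G" and Z: "wprod G zs \<in> carrier G" and yc: "y \<in> carrier G"
    using xs zs y wprod_closedS S_carr' by auto
  have "(wprod G xs \<otimes> y \<otimes> inv (wprod G xs)) \<otimes> wprod G (xs @ y # zs)
      = (wprod G xs \<otimes> y \<otimes> inv (wprod G xs)) \<otimes> (wprod G xs \<otimes> (y \<otimes> wprod G zs))"
    using wprod_appendS[of xs "y # zs"] xs y zs by simp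
  also have "\<dots> = wprod G xs \<otimes> (y \<otimes> y) \<otimes> wprod G zs"
    using X Z yc by (simp add: m_assoc inv_cancel_l)
  also have "\<dots> = wprod G (xs @ zs)" using S_sq[OF y] X Z wprod_appendS[OF xs zs] by simp
  finally show ?thesis .
qed

lemma N_Cons:
  assumes y: "y \<in> S" and a: "a \<in> lists S" and ny: "y \<notin> Nset a"
  shows "card (Nset (y # a)) = Suc (card (Nset a))"
proof -
  have yc: "y \<in> carrier G" using y S_carr' by auto
  have ac: "set a \<subseteq> carrier G" using a lists_carr by blast
  let ?f = "\<lambda>q. y \<otimes> q \<otimes> y"
  have eq: "Nset (y # a) = insert y (?f ` Nset a)"
  proof (intro equalityI subsetI)
    fix r assume r: "r \<in> Nset (y # a)"
    then have rc: "r \<in> carrier G" and p: "(y = r) \<noteq> par G a (y \<otimes> r \<otimes> y)"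
      by (auto simp: Nset_def S_inv[OF y])
    show "r \<in> insert y (?f ` Nset a)"
    proof (cases "y = r")
      case True then show ?thesis by simp
    next
      case False
      then have "y \<otimes> r \<otimes> y \<in> Nset a" using p rc yc by (simp add: Nset_def)
      moreover have "r = ?f (y \<otimes> r \<otimes> y)" using rc yc S_sq[OF y] by (simp add: m_assoc[symmetric])
        (simp add: m_assoc)
      ultimately show ?thesis by blast
    qed
  next
    fix r assume r: "r \<in> insert y (?f ` Nset a)"
    show "r \<in> Nset (y # a)"
    proof (cases "r = y")
      case True
      have "y \<otimes> y \<otimes> y = y" using S_sq[OF y] yc by simp
      then show ?thesis using True ny yc by (simp add: Nset_def S_inv[OF y])
    next
      case False
      then obtain q where q: "q \<in> Nset a" "r = ?f q" using r by blast
      have qc: "q \<in> carrier G" using q by (simp add: Nset_def)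
      have "y \<otimes> r \<otimes> y = q" using q(2) qc yc S_sq[OF y] by (simp add: m_assoc[symmetric]) (simp add: m_assoc)
      then show ?thesis using q False qc yc by (auto simp: Nset_def S_inv[OF y])
    qed
  qed
  have notin: "y \<notin> ?f ` Nset a"
  proof
    assume "y \<in> ?f ` Nset a"
    then obtain q where q: "q \<in> Nset a" "y = ?f q" by blast
    have qc: "q \<in> carrier G" using q by (simp add: Nset_def)
    have "y \<otimes> y \<otimes> y = y \<otimes> (y \<otimes> q \<otimes> y) \<otimes> y" using q by simp
    then have "q \<otimes> y = y \<otimes> y" using qc yc S_sq[OF y] by (simp add: m_assoc[symmetric])
    then have "y = q" using qc yc right_cancel by simp
    then show False using q ny by simp
  qed
  have inj: "inj_on ?f (Nset a)"
  proof (rule inj_onI)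
    fix p q assume "p \<in> Nset a" "q \<in> Nset a" "?f p = ?f q"
    then show "p = q" using yc by (auto simp: Nset_def)
  qed
  have fin: "finite (Nset a)" using Nset_finite[OF ac] by blast
  show ?thesis unfolding eq using notin inj fin by (simp add: card_image)
qed

end


context coxs
begin

lemma red_tl:
  assumes y: "y \<in> S" and c: "c \<in> lists S" and r: "length (y # c) = len (wprod G (y # c))"
  shows "length c = len (wprod G c)"
proof -
  have C: "wprod G c \<in> carrier G" using c wprod_closedS by blast
  have "len (wprod G (y # c)) \<le> len y + len (wprod G c)"
    using len_mult[OF S_carr'[OF y] C] by simp
  then show ?thesis using len_le[OF c] len_S[OF y] r by simp
qed

lemma card_red: "c \<in> lists S \<Longrightarrow> length c = len (wprod G c) \<Longrightarrow> card (Nset c) = length c"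
proof (induct c)
  case Nil
  have "Nset [] = {}" by (simp add: Nset_def)
  then show ?case by simp
next
  case (Cons y c)
  have y: "y \<in> S" and c: "c \<in> lists S" using Cons by auto
  have rc: "length c = len (wprod G c)" using red_tl[OF y c Cons(3)] .
  have ny: "y \<notin> Nset c"
  proof
    assume "y \<in> Nset c"
    then have p: "par G c y" by (simp add: Nset_def)
    obtain xs z zs where h: "c = xs @ z # zs" "y = wprod G xs \<otimes> z \<otimes> inv (wprod G xs)"
      using par_split[OF lists_carr[OF c] S_carr'[OF y] p] by blast
    have "y \<otimes> wprod G c = wprod G (xs @ zs)" using del_lemma[of xs z zs] h c by simp
    moreover have "xs @ zs \<in> lists S" using h c by simp
    ultimately have "len (wprod G (y # c)) \<le> length (xs @ zs)" using len_le by fastforce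
    then show False using Cons(3) h by simp
  qed
  show ?case using N_Cons[OF y c ny] Cons(1)[OF c rc] by simp
qed

lemma left_exch:
  assumes c: "c \<in> lists S" and rc: "length c = len (wprod G c)" and s: "s \<in> S"
    and l: "len (s \<otimes> wprod G c) \<le> length c"
  shows "\<exists>xs z zs. c = xs @ z # zs \<and> s \<otimes> wprod G c = wprod G (xs @ zs)"
proof -
  have sc: "s \<in> carrier G" using s S_carr' by blast
  have C: "wprod G c \<in> carrier G" using c wprod_closedS by blast
  have "par G c s"
  proof (rule ccontr)
    assume np: "\<not> par G c s"
    then have "s \<notin> Nset c" by (simp add: Nset_def)
    then have c1: "card (Nset (s # c)) = Suc (length c)"
      using N_Cons[OF s c] card_red[OF c rc] by simp
    obtain d where d: "d \<in> lists S" "length d = len (s \<otimes> wprod G c)" "wprod G d = s \<otimes> wprod G c"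
      using red_ex[of "s \<otimes> wprod G c"] sc C by blast
    have sc': "s # c \<in> lists S" using s c by simp
    have "Nset d = Nset (s # c)"
      using par_inv[OF d(1) sc'] d(3) by (auto simp: Nset_def)
    moreover have "card (Nset d) = length d" using card_red[OF d(1)] d by simp
    ultimately show False using c1 d(2) l by simp
  qed
  then obtain xs z zs where h: "c = xs @ z # zs" "s = wprod G xs \<otimes> z \<otimes> inv (wprod G xs)"
    using par_split[OF lists_carr[OF c] sc] by blast
  have "s \<otimes> wprod G c = wprod G (xs @ zs)" using del_lemma[of xs z zs] h c by simp
  then show ?thesis using h by blast
qed

lemma right_exch:
  assumes c: "c \<in> lists S" and rc: "length c = len (wprod G c)" and s: "s \<in> S"
    and l: "len (wprod G c \<otimes> s) \<le> length c"
  shows "\<exists>xs z zs. c = xs @ z # zs \<and> wprod G c \<otimes> s = wprod G (xs @ zs)"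
proof -
  have sc: "s \<in> carrier G" using s S_carr' by blast
  have C: "wprod G c \<in> carrier G" using c wprod_closedS by blast
  have rc': "rev c \<in> lists S" using c by (simp add: in_lists_conv_set)
  have wr: "wprod G (rev c) = inv (wprod G c)" using wprod_rev[OF c] .
  have rr: "length (rev c) = len (wprod G (rev c))" using wr len_inv[OF C] rc by simp
  have "inv (wprod G c \<otimes> s) = s \<otimes> inv (wprod G c)" using sc C S_inv[OF s] by (simp add: inv_mult_group)
  then have "len (s \<otimes> wprod G (rev c)) = len (wprod G c \<otimes> s)"
    using wr len_inv[of "wprod G c \<otimes> s"] sc C by simp
  then have l': "len (s \<otimes> wprod G (rev c)) \<le> length (rev c)" using l by simp
  obtain xs z zs where h: "rev c = xs @ z # zs" "s \<otimes> wprod G (rev c) = wprod G (xs @ zs)"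
    using left_exch[OF rc' rr s l'] by blast
  have "xs @ z # zs \<in> lists S" using h(1) rc' by simp
  then have xz: "xs @ zs \<in> lists S" by simp
  have "c = rev zs @ z # rev xs" using h by (metis rev_append rev_rev_ident rev.simps(2) append_assoc append_Cons append_Nil)
  moreover have "wprod G c \<otimes> s = wprod G (rev zs @ rev xs)"
  proof -
    have "wprod G c \<otimes> s = inv (s \<otimes> inv (wprod G c))" using sc C S_inv[OF s] by (simp add: inv_mult_group)
    also have "\<dots> = inv (wprod G (xs @ zs))" using h wr by simp
    also have "\<dots> = wprod G (rev (xs @ zs))" using wprod_rev[OF xz] by simp
    finally show ?thesis by simp
  qed
  ultimately show ?thesis by blast
qed

lemma deletion:
  "a \<in> lists S \<Longrightarrow> len (wprod G a) < length a \<Longrightarrow>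
    \<exists>xs y ys z zs. a = xs @ y # ys @ z # zs \<and> wprod G a = wprod G (xs @ ys @ zs)"
proof (induct a)
  case Nil then show ?case by simp
next
  case (Cons y a)
  have y: "y \<in> S" and a: "a \<in> lists S" using Cons by auto
  have yc: "y \<in> carrier G" using y S_carr' by blast
  show ?case
  proof (cases "len (wprod G a) < length a")
    case True
    then obtain xs y' ys z zs where h: "a = xs @ y' # ys @ z # zs" "wprod G a = wprod G (xs @ ys @ zs)"
      using Cons(1)[OF a] by blast
    then have "y # a = (y # xs) @ y' # ys @ z # zs \<and> wprod G (y # a) = wprod G ((y # xs) @ ys @ zs)"
      by simp
    then show ?thesis by blast
  next
    case False
    then have ra: "length a = len (wprod G a)" using len_le[OF a] by simp
    have "len (y \<otimes> wprod G a) \<le> length a" using Cons(3) by simp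
    then obtain ys z zs where h: "a = ys @ z # zs" "y \<otimes> wprod G a = wprod G (ys @ zs)"
      using left_exch[OF a ra y] by blast
    then have "y # a = [] @ y # ys @ z # zs \<and> wprod G (y # a) = wprod G ([] @ ys @ zs)" by simp
    then show ?thesis by blast
  qed
qed

lemma red_sub:
  "I \<subseteq> S \<Longrightarrow> a \<in> lists I \<Longrightarrow> \<exists>c\<in>lists I. wprod G c = wprod G a \<and> length c = len (wprod G a)"
proof (induct "length a" arbitrary: a rule: less_induct)
  case less
  have aS: "a \<in> lists S" using less by auto
  show ?case
  proof (cases "len (wprod G a) < length a")
    case False
    then show ?thesis using len_le[OF aS] less by (intro bexI[of _ a]) auto
  next
    case True
    then obtain xs y ys z zs where h: "a = xs @ y # ys @ z # zs" "wprod G a = wprod G (xs @ ys @ zs)"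
      using deletion[OF aS] by blast
    have "xs @ ys @ zs \<in> lists I" using h less by auto
    moreover have "length (xs @ ys @ zs) < length a" using h by simp
    ultimately show ?thesis using less(1)[of "xs @ ys @ zs"] less(2) h by auto
  qed
qed

lemma redI:
  assumes I: "I \<subseteq> S" and w: "w \<in> generate G I"
  shows "\<exists>c\<in>lists I. wprod G c = w \<and> length c = len w"
proof -
  have "w \<in> wprod G ` lists I" using gen_lists[OF I] w by simp
  then obtain a where "a \<in> lists I" "w = wprod G a" by auto
  then show ?thesis using red_sub[OF I] by blast
qed

lemma gen_sub: "I \<subseteq> S \<Longrightarrow> subgroup (generate G I) G"
  using generate_is_subgroup S_carr by blast

lemma S_in_gen:
  assumes I: "I \<subseteq> S" and s: "s \<in> S" and g: "s \<in> generate G I"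
  shows "s \<in> I"
proof -
  obtain c where c: "c \<in> lists I" "wprod G c = s" "length c = len s" using redI[OF I g] by blast
  then obtain i where "c = [i]" using len_S[OF s] by (cases c) auto
  then show ?thesis using c I S_carr' by auto
qed

lemma supp_sub_aux:
  "I \<subseteq> S \<Longrightarrow> c \<in> lists S \<Longrightarrow> length c = len (wprod G c) \<Longrightarrow> wprod G c \<in> generate G I \<Longrightarrow> set c \<subseteq> I"
proof (induct c rule: rev_induct)
  case Nil then show ?case by simp
next
  case (snoc s c)
  have s: "s \<in> S" and c: "c \<in> lists S" using snoc by auto
  have sc: "s \<in> carrier G" using s S_carr' by blast
  have C: "wprod G c \<in> carrier G" using c wprod_closedS by blast
  let ?w = "wprod G (c @ [s])"
  have w: "?w = wprod G c \<otimes> s" using wprod_appendS[of c "[s]"] c s sc by simp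
  have ws: "?w \<otimes> s = wprod G c" using w C sc S_sq[OF s] by (simp add: m_assoc)
  have lw: "len ?w = Suc (length c)" using snoc(4) by simp
  have "len (?w \<otimes> s) \<le> length c" using ws len_le[OF c] by simp
  obtain b where b: "b \<in> lists I" "wprod G b = ?w" "length b = len ?w" using redI[OF snoc(2) snoc(5)] by blast
  have bS: "b \<in> lists S" using b snoc(2) by auto
  obtain xs z zs where h: "b = xs @ z # zs" "wprod G b \<otimes> s = wprod G (xs @ zs)"
    using right_exch[OF bS] b s \<open>len (?w \<otimes> s) \<le> length c\<close> lw by fastforce
  have "xs @ zs \<in> lists I" using h b by auto
  then have g1: "?w \<otimes> s \<in> generate G I" using h b gen_lists[OF snoc(2)] by auto
  have sg: "s \<in> generate G I"
  proof -
    have "inv ?w \<otimes> (?w \<otimes> s) \<in> generate G I"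
      using gen_sub[OF snoc(2)] g1 snoc(5) by (simp add: subgroup.m_closed subgroup.m_inv_closed)
    then show ?thesis using sc C w by (simp add: inv_cancel_l)
  qed
  have sI: "s \<in> I" using S_in_gen[OF snoc(2) s sg] .
  have rc: "length c = len (wprod G c)"
  proof -
    have "len ?w \<le> len (wprod G c) + len s" using w len_mult[OF C sc] by simp
    then show ?thesis using lw len_S[OF s] len_le[OF c] by simp
  qed
  have "set c \<subseteq> I" using snoc(1)[OF snoc(2) c rc] g1 ws by simp
  then show ?case using sI by simp
qed

end


lemma append_eq_Cons_split:
  "cx @ r = xs @ z # zs \<Longrightarrow>
   (\<exists>us. xs = cx @ us \<and> r = us @ z # zs) \<or> (\<exists>us. cx = xs @ z # us \<and> zs = us @ r)"
proof -
  assume "cx @ r = xs @ z # zs"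
  then obtain us where "(cx = xs @ us \<and> us @ r = z # zs) \<or> (cx @ us = xs \<and> r = us @ z # zs)"
    by (auto simp: append_eq_append_conv2)
  then show ?thesis
  proof
    assume h: "cx = xs @ us \<and> us @ r = z # zs"
    show ?thesis
    proof (cases us)
      case Nil then show ?thesis using h by auto
    next
      case (Cons u us') then show ?thesis using h by auto
    qed
  next
    assume h: "cx @ us = xs \<and> r = us @ z # zs"
    then show ?thesis by auto
  qed
qed

context coxs
begin

definition minc where "minc I x \<longleftrightarrow> x \<in> carrier G \<and> (\<forall>z\<in>generate G I. len x \<le> len (x \<otimes> z))"

lemma gen_carr: "I \<subseteq> S \<Longrightarrow> y \<in> generate G I \<Longrightarrow> y \<in> carrier G"
  using generate_in_carrier S_carr by blast

lemma min_add:
  assumes I: "I \<subseteq> S" and m: "minc I x"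
  shows "y \<in> generate G I \<Longrightarrow> len (x \<otimes> y) = len x + len y"
proof (induct "len y" arbitrary: y rule: less_induct)
  case less
  have xc: "x \<in> carrier G" using m by (simp add: minc_def)
  have yc: "y \<in> carrier G" using gen_carr[OF I less(2)] .
  obtain r where r: "r \<in> lists I" "wprod G r = y" "length r = len y" using redI[OF I less(2)] by blast
  show ?case
  proof (cases r rule: rev_exhaust)
    case Nil
    then have "y = \<one>" using r by simp
    then show ?thesis using xc len_one by simp
  next
    case (snoc r' s)
    have sI: "s \<in> I" and r'I: "r' \<in> lists I" using r snoc by auto
    have s: "s \<in> S" and r'S: "r' \<in> lists S" using sI r'I I by auto
    have sc: "s \<in> carrier G" using s S_carr' by blast
    let ?y' = "wprod G r'"
    have y'c: "?y' \<in> carrier G" using r'S wprod_closedS by blast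
    have y'g: "?y' \<in> generate G I" using gen_lists[OF I] r'I by auto
    have yy: "y = ?y' \<otimes> s" using r snoc wprod_appendS[of r' "[s]"] r'S s sc by simp
    have ly': "len ?y' = length r'"
    proof -
      have "len y \<le> len ?y' + len s" using yy len_mult[OF y'c sc] by simp
      then show ?thesis using len_le[OF r'S] len_S[OF s] r snoc by simp
    qed
    have ih: "len (x \<otimes> ?y') = len x + len ?y'"
      using less(1)[OF _ y'g] ly' r snoc by simp
    show ?thesis
    proof (rule ccontr)
      assume ne: "len (x \<otimes> y) \<noteq> len x + len y"
      have "len (x \<otimes> y) \<le> len x + len y" using len_mult[OF xc yc] .
      then have lt: "len (x \<otimes> ?y' \<otimes> s) \<le> len (x \<otimes> ?y')"
        using ne ih ly' r snoc yy xc y'c sc by (simp add: m_assoc)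
      obtain cx where cx: "cx \<in> lists S" "length cx = len x" "wprod G cx = x" using red_ex[OF xc] by blast
      have w: "wprod G (cx @ r') = x \<otimes> ?y'" using wprod_appendS[OF cx(1) r'S] cx by simp
      have cr: "cx @ r' \<in> lists S" using cx r'S by simp
      have rr: "length (cx @ r') = len (wprod G (cx @ r'))" using w ih ly' cx by simp
      obtain xs z zs where h: "cx @ r' = xs @ z # zs" "wprod G (cx @ r') \<otimes> s = wprod G (xs @ zs)"
        using right_exch[OF cr rr s] lt w rr by fastforce
      have xzS: "xs @ z # zs \<in> lists S" using h(1) cr by simp
      then have xsS: "xs \<in> lists S" and zsS: "zs \<in> lists S" and zS: "z \<in> S" by auto
      from append_eq_Cons_split[OF h(1)] show False
      proof
        assume "\<exists>us. xs = cx @ us \<and> r' = us @ z # zs"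
        then obtain us where us: "xs = cx @ us" "r' = us @ z # zs" by blast
        have usS: "us \<in> lists S" using us r'S by auto
        have U: "wprod G (us @ zs) \<in> carrier G" using usS zsS wprod_closedS by simp
        have "x \<otimes> ?y' \<otimes> s = x \<otimes> wprod G (us @ zs)"
          using h(2) w us wprod_appendS[of cx "us @ zs"] cx usS zsS by simp
        then have "?y' \<otimes> s = wprod G (us @ zs)" using xc y'c sc U by (simp add: m_assoc)
        then have "len y \<le> length (us @ zs)" using yy len_le[of "us @ zs"] usS zsS by simp
        then show False using us r snoc by simp
      next
        assume "\<exists>us. cx = xs @ z # us \<and> zs = us @ r'"
        then obtain us where us: "cx = xs @ z # us" "zs = us @ r'" by blast
        have usS: "us \<in> lists S" using us cx by auto
        have U: "wprod G (xs @ us) \<in> carrier G" using usS xsS wprod_closedS by simp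
        have "x \<otimes> ?y' \<otimes> s = wprod G (xs @ us) \<otimes> ?y'"
          using h(2) w us wprod_appendS[of "xs @ us" r'] usS xsS r'S by simp
        then have e: "x \<otimes> (?y' \<otimes> s \<otimes> inv ?y') = wprod G (xs @ us)"
          using xc y'c sc U by (simp add: m_assoc[symmetric]) (simp add: m_assoc)
        have zg: "?y' \<otimes> s \<otimes> inv ?y' \<in> generate G I"
          using gen_sub[OF I] y'g sI by (simp add: subgroup.m_closed subgroup.m_inv_closed generate.incl)
        have "len x \<le> len (x \<otimes> (?y' \<otimes> s \<otimes> inv ?y'))" using m zg by (simp add: minc_def)
        also have "\<dots> \<le> length (xs @ us)" using e len_le[of "xs @ us"] usS xsS by simp
        finally show False using us cx by simp
      qed
    qed
  qed
qed

lemma exists_minc: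
  assumes I: "I \<subseteq> S" and w: "w \<in> carrier G"
  shows "\<exists>x y. minc I x \<and> y \<in> generate G I \<and> w = x \<otimes> y"
proof -
  let ?P = "\<lambda>n. \<exists>z\<in>generate G I. len (w \<otimes> z) = n"
  have "?P (len w)" using w by (intro bexI[of _ \<one>]) (auto intro: generate.one)
  then have "?P (LEAST n. ?P n)" by (rule LeastI)
  then obtain z0 where z0: "z0 \<in> generate G I" "len (w \<otimes> z0) = (LEAST n. ?P n)" by blast
  have z0c: "z0 \<in> carrier G" using gen_carr[OF I z0(1)] .
  have "minc I (w \<otimes> z0)"
    unfolding minc_def
  proof (intro conjI ballI)
    show "w \<otimes> z0 \<in> carrier G" using w z0c by simp
    fix z assume z: "z \<in> generate G I"
    have zc: "z \<in> carrier G" using gen_carr[OF I z] .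
    have "z0 \<otimes> z \<in> generate G I" using z z0 by (simp add: generate.eng)
    then have "?P (len (w \<otimes> (z0 \<otimes> z)))" by blast
    then have "(LEAST n. ?P n) \<le> len (w \<otimes> (z0 \<otimes> z))" by (rule Least_le)
    then show "len (w \<otimes> z0) \<le> len (w \<otimes> z0 \<otimes> z)" using z0 w z0c zc by (simp add: m_assoc)
  qed
  moreover have "inv z0 \<in> generate G I" using gen_sub[OF I] z0 by (simp add: subgroup.m_inv_closed)
  moreover have "w = (w \<otimes> z0) \<otimes> inv z0" using w z0c by (simp add: m_assoc)
  ultimately show ?thesis by blast
qed

lemma minc_X: "I \<subseteq> S \<Longrightarrow> minc I x \<Longrightarrow> x \<in> min_reps G S I"
  unfolding min_reps_def
proof (intro CollectI conjI ballI)
  assume I: "I \<subseteq> S" and m: "minc I x"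
  show "x \<in> carrier G" using m by (simp add: minc_def)
  fix s assume s: "s \<in> I"
  have "len (x \<otimes> s) = len x + len s" using min_add[OF I m] s by (simp add: generate.incl)
  then show "len x < len (x \<otimes> s)" using len_S s I by auto
qed

lemma X_minc:
  assumes I: "I \<subseteq> S" and x: "x \<in> min_reps G S I"
  shows "minc I x"
proof -
  have xc: "x \<in> carrier G" using x by (simp add: min_reps_def)
  obtain x0 y where h: "minc I x0" "y \<in> generate G I" "x = x0 \<otimes> y" using exists_minc[OF I xc] by blast
  have x0c: "x0 \<in> carrier G" using h by (simp add: minc_def)
  have yc: "y \<in> carrier G" using gen_carr[OF I h(2)] .
  have la: "len x = len x0 + len y" using min_add[OF I h(1) h(2)] h by simp
  show ?thesis
  proof (cases "y = \<one>")
    case True then show ?thesis using h x0c by simp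
  next
    case False
    obtain r where r: "r \<in> lists I" "wprod G r = y" "length r = len y" using redI[OF I h(2)] by blast
    have "r \<noteq> []" using r False by auto
    then obtain r' s where rs: "r = r' @ [s]" by (cases r rule: rev_exhaust) auto
    have sI: "s \<in> I" and r'I: "r' \<in> lists I" using r rs by auto
    have s: "s \<in> S" and r'S: "r' \<in> lists S" using sI r'I I by auto
    have sc: "s \<in> carrier G" using s S_carr' by blast
    let ?y' = "wprod G r'"
    have y'c: "?y' \<in> carrier G" using r'S wprod_closedS by blast
    have yy: "y = ?y' \<otimes> s" using r rs wprod_appendS[of r' "[s]"] r'S s sc by simp
    have "x \<otimes> s = x0 \<otimes> ?y'" using h(3) yy x0c y'c sc S_sq[OF s] by (simp add: m_assoc)
    then have "len (x \<otimes> s) \<le> len x0 + len ?y'" using len_mult[OF x0c y'c] by simp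
    also have "\<dots> < len x" using la len_le[OF r'S] r rs by simp
    finally show ?thesis using x sI by (auto simp: min_reps_def)
  qed
qed

lemma X_add: "I \<subseteq> S \<Longrightarrow> x \<in> min_reps G S I \<Longrightarrow> y \<in> generate G I \<Longrightarrow> len (x \<otimes> y) = len x + len y"
  using min_add X_minc by blast

lemma X_carr: "x \<in> min_reps G S I \<Longrightarrow> x \<in> carrier G"
  by (simp add: min_reps_def)

lemma decomp:
  assumes I: "I \<subseteq> S" and w: "w \<in> carrier G"
  shows "\<exists>x\<in>min_reps G S I. \<exists>y\<in>generate G I. w = x \<otimes> y"
  using exists_minc[OF I w] minc_X[OF I] by blast

lemma uniq:
  assumes I: "I \<subseteq> S" and x: "x \<in> min_reps G S I" and x': "x' \<in> min_reps G S I"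
    and y: "y \<in> generate G I" and y': "y' \<in> generate G I" and e: "x \<otimes> y = x' \<otimes> y'"
  shows "x = x' \<and> y = y'"
proof -
  have xc: "x \<in> carrier G" and x'c: "x' \<in> carrier G" using x x' X_carr by auto
  have yc: "y \<in> carrier G" and y'c: "y' \<in> carrier G" using y y' gen_carr[OF I] by auto
  let ?z = "y \<otimes> inv y'"
  have zg: "?z \<in> generate G I" and zg': "inv ?z \<in> generate G I"
    using gen_sub[OF I] y y' by (simp_all add: subgroup.m_closed subgroup.m_inv_closed)
  have zc: "?z \<in> carrier G" using yc y'c by simp
  have e1: "x' = x \<otimes> ?z"
  proof -
    have "x \<otimes> ?z = (x \<otimes> y) \<otimes> inv y'" using xc yc y'c by (simp add: m_assoc)
    also have "\<dots> = x' \<otimes> y' \<otimes> inv y'" using e by simp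
    also have "\<dots> = x'" using x'c y'c by (simp add: m_assoc)
    finally show ?thesis by simp
  qed
  have e2: "x = x' \<otimes> inv ?z" using e1 xc zc by (simp add: m_assoc)
  have "len x' = len x + len ?z" using e1 X_add[OF I x zg] by simp
  moreover have "len x = len x' + len (inv ?z)" using e2 X_add[OF I x' zg'] by simp
  moreover have "len (inv ?z) = len ?z" using len_inv[OF zc] .
  ultimately have "len ?z = 0" by simp
  then have "?z = \<one>" using len_zero[OF zc] by simp
  moreover have "y = ?z \<otimes> y'" using yc y'c by (simp add: m_assoc)
  ultimately have "y = y'" using y'c by simp
  then show ?thesis using e xc x'c yc by simp
qed

lemma pc_eq:
  assumes I: "I \<subseteq> S" and x: "x \<in> min_reps G S I" and y: "y \<in> generate G I"
  shows "par_comp G S I (x \<otimes> y) = y"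
  unfolding par_comp_def parabolic_def
proof (rule the_equality)
  have xc: "x \<in> carrier G" and yc: "y \<in> carrier G" using x X_carr y gen_carr[OF I] by auto
  show "y \<in> generate G I \<and> x \<otimes> y \<otimes> inv y \<in> min_reps G S I" using x y xc yc by (simp add: m_assoc)
  fix y2 assume h: "y2 \<in> generate G I \<and> x \<otimes> y \<otimes> inv y2 \<in> min_reps G S I"
  have y2c: "y2 \<in> carrier G" using h gen_carr[OF I] by auto
  have "(x \<otimes> y \<otimes> inv y2) \<otimes> y2 = x \<otimes> y" using xc yc y2c by (simp add: m_assoc)
  then show "y2 = y" using uniq[OF I h[THEN conjunct2] x h[THEN conjunct1] y] by simp
qed

lemma gen_mono: "J \<subseteq> I \<Longrightarrow> I \<subseteq> S \<Longrightarrow> generate G J \<subseteq> generate G I"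
  using gen_lists[of J] gen_lists[of I] lists_mono[of J I] by auto

lemma supp_S: "supp G S w \<subseteq> S"
  by (auto simp: supp_def reduced_word_def)

lemma w_in_supp: "w \<in> carrier G \<Longrightarrow> w \<in> generate G (supp G S w)"
proof -
  assume w: "w \<in> carrier G"
  obtain c where c: "c \<in> lists S" "length c = len w" "wprod G c = w" using red_ex[OF w] by blast
  have "reduced_word G S c w" using c by (simp add: reduced_word_def)
  then have "c \<in> lists (supp G S w)" by (auto simp: supp_def)
  then show ?thesis using gen_lists[OF supp_S] c by auto
qed

lemma supp_le:
  assumes I: "I \<subseteq> S" and w: "w \<in> generate G I"
  shows "supp G S w \<subseteq> I"
proof
  fix s assume "s \<in> supp G S w"
  then obtain c where c: "reduced_word G S c w" "s \<in> set c" by (auto simp: supp_def)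
  have "c \<in> lists S" "length c = len (wprod G c)" "wprod G c \<in> generate G I"
    using c w by (auto simp: reduced_word_def)
  then have "set c \<subseteq> I" using supp_sub_aux[OF I] by blast
  then show "s \<in> I" using c by blast
qed

lemma supp_prod:
  assumes I: "I \<subseteq> S" and x: "x \<in> min_reps G S I" and y: "y \<in> generate G I"
  shows "supp G S y \<subseteq> supp G S (x \<otimes> y)"
proof
  fix s assume "s \<in> supp G S y"
  then obtain r where r: "reduced_word G S r y" "s \<in> set r" by (auto simp: supp_def)
  have xc: "x \<in> carrier G" using x X_carr by blast
  obtain cx where cx: "cx \<in> lists S" "length cx = len x" "wprod G cx = x" using red_ex[OF xc] by blast
  have rS: "r \<in> lists S" using r by (simp add: reduced_word_def)
  have "reduced_word G S (cx @ r) (x \<otimes> y)"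
    using r cx X_add[OF I x y] wprod_appendS[OF cx(1) rS] by (simp add: reduced_word_def)
  then show "s \<in> supp G S (x \<otimes> y)" using r by (auto simp: supp_def)
qed

lemma X_anti: "J \<subseteq> I \<Longrightarrow> min_reps G S I \<subseteq> min_reps G S J"
  by (auto simp: min_reps_def)

lemma nested:
  assumes J: "J \<subseteq> I" and I: "I \<subseteq> S" and v: "v \<in> carrier G"
  shows "par_comp G S J (par_comp G S I v) = par_comp G S J v"
proof -
  have JS: "J \<subseteq> S" using J I by blast
  obtain x y where xy: "x \<in> min_reps G S I" "y \<in> generate G I" "v = x \<otimes> y" using decomp[OF I v] by blast
  have pI: "par_comp G S I v = y" using pc_eq[OF I xy(1,2)] xy by simp
  have yc: "y \<in> carrier G" using gen_carr[OF I xy(2)] .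
  have xc: "x \<in> carrier G" using X_carr xy by blast
  obtain x' y' where xy': "x' \<in> min_reps G S J" "y' \<in> generate G J" "y = x' \<otimes> y'" using decomp[OF JS yc] by blast
  have pJ: "par_comp G S J y = y'" using pc_eq[OF JS xy'(1,2)] xy' by simp
  have x'c: "x' \<in> carrier G" using X_carr xy' by blast
  have y'c: "y' \<in> carrier G" using gen_carr[OF JS xy'(2)] .
  have y'I: "y' \<in> generate G I" using gen_mono[OF J I] xy' by blast
  have x'I: "x' \<in> generate G I"
  proof -
    have "y \<otimes> inv y' \<in> generate G I" using gen_sub[OF I] xy(2) y'I
      by (simp add: subgroup.m_closed subgroup.m_inv_closed)
    moreover have "y \<otimes> inv y' = x'" using xy'(3) x'c y'c by (simp add: m_assoc)
    ultimately show ?thesis by simp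
  qed
  have "x \<otimes> x' \<in> min_reps G S J"
    unfolding min_reps_def
  proof (intro CollectI conjI ballI)
    show "x \<otimes> x' \<in> carrier G" using xc x'c by simp
    fix s assume s: "s \<in> J"
    have sc: "s \<in> carrier G" using s JS S_carr' by blast
    have sI: "s \<in> generate G I" using s J by (auto intro: generate.incl)
    have x's: "x' \<otimes> s \<in> generate G I" using gen_sub[OF I] x'I sI by (simp add: subgroup.m_closed)
    have "len (x \<otimes> x') = len x + len x'" using X_add[OF I xy(1) x'I] .
    also have "\<dots> < len x + len (x' \<otimes> s)" using xy'(1) s by (simp add: min_reps_def)
    also have "\<dots> = len (x \<otimes> (x' \<otimes> s))" using X_add[OF I xy(1) x's] by simp
    finally show "len (x \<otimes> x') < len (x \<otimes> x' \<otimes> s)" using xc x'c sc by (simp add: m_assoc)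
  qed
  moreover have "v = (x \<otimes> x') \<otimes> y'" using xy xy' xc x'c y'c by (simp add: m_assoc)
  ultimately have "par_comp G S J v = y'" using pc_eq[OF JS _ xy'(2)] by simp
  then show ?thesis using pI pJ by simp
qed

end


context coxs
begin

lemma part1:
  assumes le: "cox_le G S u v"
  shows "supp G S u \<subseteq> supp G S v"
proof -
  let ?I = "supp G S u"
  have u: "u \<in> carrier G" and v: "v \<in> carrier G" and p: "par_comp G S ?I v = u"
    using le by (auto simp: cox_le_def)
  obtain x y where xy: "x \<in> min_reps G S ?I" "y \<in> generate G ?I" "v = x \<otimes> y"
    using decomp[OF supp_S v] by blast
  have "y = u" using pc_eq[OF supp_S xy(1,2)] xy p by simp
  then show ?thesis using supp_prod[OF supp_S xy(1,2)] xy by simp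
qed

lemma part3:
  assumes le: "cox_le G S u v"
  shows "left_weak_le G S u v"
proof -
  let ?I = "supp G S u"
  have u: "u \<in> carrier G" and v: "v \<in> carrier G" and p: "par_comp G S ?I v = u"
    using le by (auto simp: cox_le_def)
  obtain x y where xy: "x \<in> min_reps G S ?I" "y \<in> generate G ?I" "v = x \<otimes> y"
    using decomp[OF supp_S v] by blast
  have "y = u" using pc_eq[OF supp_S xy(1,2)] xy p by simp
  then show ?thesis unfolding left_weak_le_def
    using xy X_carr X_add[OF supp_S xy(1,2)] by blast
qed

lemma part2:
  assumes le: "cox_le G S u v"
  shows "cox_interval G S u v = {par_comp G S I v | I. supp G S u \<subseteq> I \<and> I \<subseteq> supp G S v}"
proof (intro equalityI subsetI)
  fix w assume "w \<in> cox_interval G S u v"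
  then have w: "cox_le G S u w" "cox_le G S w v" by (auto simp: cox_interval_def)
  have "par_comp G S (supp G S w) v = w" using w(2) by (simp add: cox_le_def)
  moreover have "supp G S u \<subseteq> supp G S w" using part1[OF w(1)] .
  moreover have "supp G S w \<subseteq> supp G S v" using part1[OF w(2)] .
  ultimately have "\<exists>I. w = par_comp G S I v \<and> supp G S u \<subseteq> I \<and> I \<subseteq> supp G S v"
    by (intro exI[of _ "supp G S w"]) simp
  then show "w \<in> {par_comp G S I v | I. supp G S u \<subseteq> I \<and> I \<subseteq> supp G S v}" by simp
next
  fix w assume "w \<in> {par_comp G S I v | I. supp G S u \<subseteq> I \<and> I \<subseteq> supp G S v}"
  then obtain I where I: "supp G S u \<subseteq> I" "I \<subseteq> supp G S v" and wI: "w = par_comp G S I v" by blast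
  have IS: "I \<subseteq> S" using I supp_S by blast
  have u: "u \<in> carrier G" and v: "v \<in> carrier G" and p: "par_comp G S (supp G S u) v = u"
    using le by (auto simp: cox_le_def)
  obtain x y where xy: "x \<in> min_reps G S I" "y \<in> generate G I" "v = x \<otimes> y"
    using decomp[OF IS v] by blast
  have wy: "w = y" using pc_eq[OF IS xy(1,2)] xy wI by simp
  have wc: "w \<in> carrier G" using wy gen_carr[OF IS xy(2)] by simp
  have "par_comp G S (supp G S u) w = u" using nested[OF I(1) IS v] wI p by simp
  then have l1: "cox_le G S u w" using u wc by (simp add: cox_le_def)
  have sw: "supp G S w \<subseteq> I" using supp_le[OF IS] xy(2) wy by simp
  have "x \<in> min_reps G S (supp G S w)" using X_anti[OF sw] xy(1) by blast
  then have "par_comp G S (supp G S w) v = w"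
    using pc_eq[OF supp_S _ w_in_supp[OF wc]] xy wy by simp
  then have l2: "cox_le G S w v" using wc v by (simp add: cox_le_def)
  show "w \<in> cox_interval G S u v" using l1 l2 wc by (simp add: cox_interval_def)
qed

lemma part4:
  assumes u: "u \<in> carrier G"
  shows "card {w \<in> carrier G. cox_le G S u w} = card (rcosets (parabolic G (supp G S u)))"
proof -
  let ?I = "supp G S u"
  let ?H = "generate G ?I"
  let ?X = "min_reps G S ?I"
  let ?A = "{w \<in> carrier G. cox_le G S u w}"
  have IS: "?I \<subseteq> S" by (rule supp_S)
  have uH: "u \<in> ?H" using w_in_supp[OF u] .
  have sg: "subgroup ?H G" using gen_sub[OF IS] .
  have b1: "bij_betw (\<lambda>x. x \<otimes> u) ?X ?A"
    unfolding bij_betw_def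
  proof (intro conjI)
    show "inj_on (\<lambda>x. x \<otimes> u) ?X"
      by (rule inj_onI) (use u X_carr in auto)
    show "(\<lambda>x. x \<otimes> u) ` ?X = ?A"
    proof (intro equalityI subsetI)
      fix w assume "w \<in> (\<lambda>x. x \<otimes> u) ` ?X"
      then obtain x where x: "x \<in> ?X" "w = x \<otimes> u" by blast
      have "par_comp G S ?I w = u" using pc_eq[OF IS x(1) uH] x by simp
      then show "w \<in> ?A" using x X_carr u by (simp add: cox_le_def)
    next
      fix w assume w: "w \<in> ?A"
      then have wc: "w \<in> carrier G" and p: "par_comp G S ?I w = u" by (auto simp: cox_le_def)
      obtain x y where xy: "x \<in> ?X" "y \<in> ?H" "w = x \<otimes> y" using decomp[OF IS wc] by blast
      have "y = u" using pc_eq[OF IS xy(1,2)] xy p by simp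
      then show "w \<in> (\<lambda>x. x \<otimes> u) ` ?X" using xy by blast
    qed
  qed
  have b2: "bij_betw (\<lambda>x. ?H #> inv x) ?X (rcosets ?H)"
    unfolding bij_betw_def
  proof (intro conjI)
    show "inj_on (\<lambda>x. ?H #> inv x) ?X"
    proof (rule inj_onI)
      fix x x' assume x: "x \<in> ?X" and x': "x' \<in> ?X" and e: "?H #> inv x = ?H #> inv x'"
      have xc: "x \<in> carrier G" and x'c: "x' \<in> carrier G" using x x' X_carr by auto
      have "inv x' \<in> ?H #> inv x" using repr_independenceD[OF sg _ e] x'c by simp
      then obtain h where h: "h \<in> ?H" "inv x' = h \<otimes> inv x" by (auto simp: r_coset_def)
      have hc: "h \<in> carrier G" using h gen_carr[OF IS] by blast
      have "x' = inv (inv x')" using x'c by simp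
      also have "\<dots> = inv (h \<otimes> inv x)" using h by simp
      also have "\<dots> = x \<otimes> inv h" using hc xc by (simp add: inv_mult_group)
      finally have "x' = x \<otimes> inv h" .
      then have "x \<otimes> inv h = x' \<otimes> \<one>" using x'c by simp
      moreover have "inv h \<in> ?H" using sg h by (simp add: subgroup.m_inv_closed)
      moreover have "\<one> \<in> ?H" by (rule generate.one)
      ultimately show "x = x'" using uniq[OF IS x x'] by blast
    qed
    show "(\<lambda>x. ?H #> inv x) ` ?X = rcosets ?H"
    proof (intro equalityI subsetI)
      fix C assume "C \<in> (\<lambda>x. ?H #> inv x) ` ?X"
      then obtain x where "x \<in> ?X" "C = ?H #> inv x" by blast
      then show "C \<in> rcosets ?H" using X_carr by (auto simp: RCOSETS_def)
    next
      fix C assume "C \<in> rcosets ?H"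
      then obtain a where a: "a \<in> carrier G" "C = ?H #> a" by (auto simp: RCOSETS_def)
      obtain x y where xy: "x \<in> ?X" "y \<in> ?H" "inv a = x \<otimes> y" using decomp[OF IS] a by blast
      have xc: "x \<in> carrier G" and yc: "y \<in> carrier G" using xy X_carr gen_carr[OF IS] by auto
      have "a = inv (inv a)" using a by simp
      also have "\<dots> = inv (x \<otimes> y)" using xy(3) by simp
      also have "\<dots> = inv y \<otimes> inv x" using xc yc by (simp add: inv_mult_group)
      finally have "C = ?H #> (inv y \<otimes> inv x)" using a by simp
      also have "\<dots> = (?H #> inv y) #> inv x"
        using coset_mult_assoc[OF subgroup.subset[OF sg], of "inv y" "inv x"] xc yc by simp
      also have "?H #> inv y = ?H"
      proof -
        have "inv y \<in> ?H" using sg xy(2) by (simp add: subgroup.m_inv_closed)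
        then show ?thesis using subgroup.rcos_const[OF sg is_group] by blast
      qed
      finally show "C \<in> (\<lambda>x. ?H #> inv x) ` ?X" using xy by blast
    qed
  qed
  show ?thesis using bij_betw_same_card[OF b1] bij_betw_same_card[OF b2]
    by (simp add: parabolic_def)
qed

end

lemma coxs_intro: "coxeter_system G S \<Longrightarrow> coxs G S"
  unfolding coxs_def coxs_axioms_def by (simp add: coxeter_system_def)

theorem mainTheorem4:
  fixes G :: "('a, 'b) monoid_scheme" and S :: "'a set" and u v :: 'a and k :: nat
  assumes cox: "coxeter_system G S"
    and fin: "finite S"
    and u: "u \<in> carrier G" and v: "v \<in> carrier G"
  shows "(cox_le G S u v \<longrightarrow> cosupp G S v \<subseteq> cosupp G S u)
       \<and> (cox_le G S u v \<longrightarrow>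
            cox_interval G S u v = {par_comp G S I v | I. supp G S u \<subseteq> I \<and> I \<subseteq> supp G S v})
       \<and> (cox_le G S u v \<longrightarrow> left_weak_le G S u v)
       \<and> (finite (rcosets\<^bsub>G\<^esub> (parabolic G (supp G S u))) \<and>
          card (rcosets\<^bsub>G\<^esub> (parabolic G (supp G S u))) = k
          \<longrightarrow> card {w \<in> carrier G. cox_le G S u w} = k)"
proof -
  interpret c: coxs G S using coxs_intro[OF cox] .
  show ?thesis
    using c.part1 c.part2 c.part3 c.part4[OF u] by (auto simp: cosupp_def)
qed


end
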